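(* Let $\tau\ge1$ and consider two candidates $P,Q$. Weighted Majority Rule 1 (defined in the context) has distortion at most $\max\big\{\frac{\tau+2}{\tau},\frac{3\tau-1}{\tau+1}\big\}$; i.e., for every instance, if it selects $P$ then $SC(P)\le\max\{\frac{\tau+2}{\tau},\frac{3\tau-1}{\tau+1}\}\,SC(Q)$.
   Context: Voters $N=\{1,\dots,n\}$ and candidates are points of an arbitrary metric space $(X,d)$. Voter $i$ prefers $P$ to $Q$ only if $d(i,P)\le d(i,Q)$, with preference strength $\alpha_i^{PQ}=d(i,Q)/d(i,P)\ge1$. $SC(Y)=\sum_{i\in N}d(i,Y)$. For two candidates $P,Q$ and a threshold $\tau$, the information available is every voter's preferred candidate and whether that voter's preference strength is $>\tau$ (strong) or $\le\tau$ (weak). Let $A_2$ ($A_1$) be the voters preferring $P$ with strength $>\tau$ ($\le\tau$), and $B_2$ ($B_1$) the voters preferring $Q$ with strength $>\tau$ ($\le\tau$). Weighted Majority Rule 1: if $\tau\ge\sqrt2+1$, give weight $\frac{\tau+1}{\tau-1}$ to each strong voter and weight $1$ to each weak voter; if $\tau<\sqrt2+1$, give weight $\tau$ to each strong voter and weight $1$ to each weak voter. Select $P$ if the total weight of voters preferring $P$ is at least that of voters preferring $Q$ (i.e. $w|A_2|+|A_1|\ge |B_1|+w|B_2|$ for the appropriate strong weight $w$), and $Q$ otherwise (ties may be broken arbitrarily). *)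

theory Defs
  imports "HOL-Analysis.Analysis" "HOL-Library.Extended_Real"
begin

text \<open>Preference strength of a voter located at x for P over Q: d(x,Q)/d(x,P),
  with the conventions c/0 = infinity for c > 0 and 0/0 = 1 (indifference).\<close>
definition strength :: "('a \<Rightarrow> 'a \<Rightarrow> real) \<Rightarrow> 'a \<Rightarrow> 'a \<Rightarrow> 'a \<Rightarrow> ereal" where
  "strength d x P Q =
     (if d x P = 0 then (if d x Q = 0 then 1 else \<infinity>) else ereal (d x Q / d x P))"

definition SC :: "('a \<Rightarrow> 'a \<Rightarrow> real) \<Rightarrow> 'i set \<Rightarrow> ('i \<Rightarrow> 'a) \<Rightarrow> 'a \<Rightarrow> real" where
  "SC d N v Y = (\<Sum>i\<in>N. d (v i) Y)"

definition wmr1_weight :: "real \<Rightarrow> real" where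
  "wmr1_weight \<tau> = (if \<tau> \<ge> sqrt 2 + 1 then (\<tau> + 1) / (\<tau> - 1) else \<tau>)"

definition A2 where "A2 d N v prefP \<tau> P Q = {i\<in>N. prefP i \<and> strength d (v i) P Q > ereal \<tau>}"
definition A1 where "A1 d N v prefP \<tau> P Q = {i\<in>N. prefP i \<and> strength d (v i) P Q \<le> ereal \<tau>}"
definition B2 where "B2 d N v prefP \<tau> P Q = {i\<in>N. \<not> prefP i \<and> strength d (v i) Q P > ereal \<tau>}"
definition B1 where "B1 d N v prefP \<tau> P Q = {i\<in>N. \<not> prefP i \<and> strength d (v i) Q P \<le> ereal \<tau>}"

text \<open>Weighted Majority Rule 1 (may) select P: weight of P-supporters is at least that of Q-supporters.\<close>
definition wmr1_selects_P ::
  "('a \<Rightarrow> 'a \<Rightarrow> real) \<Rightarrow> 'i set \<Rightarrow> ('i \<Rightarrow> 'a) \<Rightarrow> ('i \<Rightarrow> bool) \<Rightarrow> real \<Rightarrow> 'a \<Rightarrow> 'a \<Rightarrow> bool" where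
  "wmr1_selects_P d N v prefP \<tau> P Q \<longleftrightarrow>
     wmr1_weight \<tau> * real (card (A2 d N v prefP \<tau> P Q)) + real (card (A1 d N v prefP \<tau> P Q))
     \<ge> real (card (B1 d N v prefP \<tau> P Q)) + wmr1_weight \<tau> * real (card (B2 d N v prefP \<tau> P Q))"

end

theory Submission imports Defs begin

lemma lA2:
  fixes x y D c t :: real
  assumes "0 \<le> x" "t * x \<le> y" "D \<le> x + y" "c * t \<ge> t + 2" "t \<ge> 1"
  shows "x - c * y \<le> - D"
proof -
  have "2 * (t * x) \<le> 2 * y" using assms by simp
  moreover have "0 \<le> t * x" using assms by simp
  moreover have y0: "0 \<le> y" using assms(2) \<open>0 \<le> t * x\<close> by linarith
  moreover have "(t + 2) * y \<le> (c * t) * y" using assms y0 by (intro mult_right_mono) auto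
  ultimately have "t * (2*x + y) \<le> t * (c * y)" by (simp add: algebra_simps)
  hence "2*x + y \<le> c*y" using assms by simp
  thus ?thesis using assms by linarith
qed

lemma lA1:
  fixes x y D c w :: real
  assumes "0 \<le> x" "x \<le> y" "D \<le> x + y" "c \<ge> 1 + 2 / w" "w > 0"
  shows "x - c * y \<le> - D / w"
proof -
  have "y \<ge> D/2" using assms by linarith
  have "(c - 1) * y \<ge> (2/w) * y" using assms by (intro mult_right_mono) auto
  moreover have "(2/w) * y \<ge> (2/w) * (D/2)" using assms \<open>y \<ge> D/2\<close> by (intro mult_left_mono) auto
  ultimately show ?thesis using assms by (simp add: algebra_simps)
qed

lemma lB1:
  fixes x y D c w t :: real
  assumes "x \<le> t * y" "x \<le> y + D" "0 \<le> y" "0 \<le> D" "w > 0" "c \<ge> 1"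
    and cond: "c \<ge> t \<or> (t - c) * w \<le> t - 1"
  shows "x - c * y \<le> D / w"
proof (cases "c \<ge> t")
  case True
  have "t * y \<le> c * y" using True assms by (intro mult_right_mono) auto
  moreover have "D / w \<ge> 0" using assms by simp
  ultimately show ?thesis using assms by linarith
next
  case False
  hence h: "(t - c) * w \<le> t - 1" using cond by auto
  have t1: "t > 1" using False assms by linarith
  define a where "a = (c - 1) / (t - 1)"
  have at: "a * (t - 1) = c - 1" using t1 by (simp add: a_def)
  have a0: "0 \<le> a" using t1 assms by (simp add: a_def)
  have a1: "a \<le> 1" using t1 False by (simp add: a_def divide_le_eq_1_pos)
  have "x = a * x + (1 - a) * x" by (simp add: algebra_simps)
  also have "\<dots> \<le> a * (t * y) + (1 - a) * (y + D)"
    using a0 a1 assms by (intro add_mono mult_left_mono) auto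
  also have "\<dots> = (1 + a * (t - 1)) * y + (1 - a) * D" by (simp add: algebra_simps)
  also have "\<dots> = c * y + (1 - a) * D" by (simp add: at)
  finally have "x - c*y \<le> (1 - a) * D" by simp
  also have "(1 - a) * D \<le> D / w"
  proof -
    have "(1 - a) * (t - 1) = t - c" using at by (simp add: algebra_simps)
    hence "((1 - a) * w) * (t - 1) = (t - c) * w" by (metis mult.commute mult.assoc)
    hence "((1 - a) * w) * (t - 1) \<le> 1 * (t - 1)" using h by (simp only: mult_1)
    hence "(1 - a) * w \<le> 1" using t1 by (simp only: mult_le_cancel_right)
    hence "(1 - a) * w * D \<le> 1 * D" using assms by (intro mult_right_mono) auto
    hence "(1 - a) * D * w \<le> D" by (simp add: algebra_simps)
    thus ?thesis using assms by (simp add: le_divide_eq)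
  qed
  finally show ?thesis .
qed

lemma lB2:
  fixes x y D c w :: real
  assumes "x \<le> y + D" "0 \<le> y" "c \<ge> 1" "w > 0"
  shows "x - c * y \<le> D / w * w"
proof -
  have "1 * y \<le> c * y" using assms by (intro mult_right_mono) auto
  moreover have "D / w * w = D" using assms by simp
  ultimately show ?thesis using assms by linarith
qed


lemma sum_if_card:
  assumes "finite N" "S \<subseteq> N"
  shows "(\<Sum>i\<in>N. if i \<in> S then (k::real) else 0) = k * real (card S)"
proof -
  have "(\<Sum>i\<in>N. if i \<in> S then (k::real) else 0) = sum (\<lambda>_. k) (N \<inter> {i. i \<in> S})"
    using assms by (simp add: sum.If_cases)
  also have "N \<inter> {i. i \<in> S} = S" using assms by auto
  finally show ?thesis by simp
qed

lemma strength_gt: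
  assumes "strength d a P Q > ereal t" "t \<ge> 1" "d a P \<ge> 0" "d a Q \<ge> 0"
  shows "t * d a P \<le> d a Q"
proof (cases "d a P = 0")
  case True thus ?thesis using assms by simp
next
  case False
  hence "d a Q / d a P > t" using assms by (simp add: strength_def)
  thus ?thesis using False assms by (simp add: field_simps)
qed

lemma strength_le:
  assumes "strength d a Q P \<le> ereal t" "t \<ge> 1" "d a P \<ge> 0" "d a Q \<ge> 0"
  shows "d a P \<le> t * d a Q"
proof (cases "d a Q = 0")
  case True thus ?thesis using assms by (auto simp: strength_def split: if_splits)
next
  case False
  hence "d a P / d a Q \<le> t" using assms by (simp add: strength_def)
  thus ?thesis using False assms by (simp add: field_simps)
qed

lemma params:
  fixes t :: real
  assumes t: "t \<ge> 1"
    and c_def: "c = max ((t + 2) / t) ((3 * t - 1) / (t + 1))"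
    and w_def: "w = wmr1_weight t"
  shows "w > 0" "c * t \<ge> t + 2" "c \<ge> 1 + 2 / w" "c \<ge> 1" "c \<ge> t \<or> (t - c) * w \<le> t - 1"
proof -
  have c1: "c \<ge> (t + 2) / t" and c2: "c \<ge> (3 * t - 1) / (t + 1)" unfolding c_def by auto
  have ct: "c * t \<ge> t + 2" using c1 t by (simp add: field_simps)
  have ct2: "c * (t + 1) \<ge> 3 * t - 1" using c2 t by (simp add: field_simps)
  show "c * t \<ge> t + 2" by (fact ct)
  have "(t + 2) / t \<ge> 1" using t by (simp add: field_simps)
  thus "c \<ge> 1" using c1 by linarith
  have s2: "sqrt 2 > 1" by simp
  show "w > 0"
  proof (cases "t \<ge> sqrt 2 + 1")
    case True
    hence "t - 1 > 0" using s2 by linarith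
    thus ?thesis using True t by (simp add: w_def wmr1_weight_def)
  next
    case False thus ?thesis using t by (simp add: w_def wmr1_weight_def)
  qed
  show "c \<ge> 1 + 2 / w"
  proof (cases "t \<ge> sqrt 2 + 1")
    case True
    have "t > 1" using True s2 by linarith
    have we: "w = (t+1)/(t-1)" using True by (simp add: w_def wmr1_weight_def)
    have "1 + 2 / w = (3 * t - 1) / (t + 1)" unfolding we using \<open>t > 1\<close> by (simp add: field_simps)
    thus ?thesis using c2 by simp
  next
    case False
    hence "w = t" by (simp add: w_def wmr1_weight_def)
    hence "1 + 2 / w = (t + 2) / t" using t by (simp add: field_simps)
    thus ?thesis using c1 by simp
  qed
  show "c \<ge> t \<or> (t - c) * w \<le> t - 1"
  proof (cases "t \<ge> sqrt 2 + 1")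
    case True
    have t1: "t > 1" using True s2 by linarith
    have w: "w = (t+1)/(t-1)" using True by (simp add: w_def wmr1_weight_def)
    have "(t - c) * (t + 1) \<le> (t - 1) * (t - 1)" using ct2 by (simp add: algebra_simps)
    hence "(t - c) * w \<le> t - 1" using t1 unfolding w by (simp add: field_simps)
    thus ?thesis by simp
  next
    case False
    hence w: "w = t" by (simp add: w_def wmr1_weight_def)
    have "t - 1 < sqrt 2" using False by simp
    hence "(t - 1)^2 < (sqrt 2)^2" using t by (intro power_strict_mono) auto
    hence "(t - 1)^2 < 2" by simp
    hence "(t - c) * t \<le> t - 1" using ct by (simp add: power2_eq_square algebra_simps)
    thus ?thesis using w by simp
  qed
qed

theorem mainTheorem3:
  fixes M :: "'a set" and d :: "'a \<Rightarrow> 'a \<Rightarrow> real"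
    and N :: "'i set" and v :: "'i \<Rightarrow> 'a" and prefP :: "'i \<Rightarrow> bool"
    and \<tau> :: real and P Q :: 'a
  assumes "Metric_space M d"
    and "finite N"
    and "\<forall>i\<in>N. v i \<in> M"
    and "P \<in> M" and "Q \<in> M"
    and "\<tau> \<ge> 1"
    and "\<forall>i\<in>N. prefP i \<longrightarrow> d (v i) P \<le> d (v i) Q"
    and "\<forall>i\<in>N. \<not> prefP i \<longrightarrow> d (v i) Q \<le> d (v i) P"
    and "wmr1_selects_P d N v prefP \<tau> P Q"
  shows "SC d N v P \<le> max ((\<tau> + 2) / \<tau>) ((3 * \<tau> - 1) / (\<tau> + 1)) * SC d N v Q"
proof -
  interpret Metric_space M d by fact
  define c where "c = max ((\<tau> + 2) / \<tau>) ((3 * \<tau> - 1) / (\<tau> + 1))"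
  define w where "w = wmr1_weight \<tau>"
  note pr = params[OF assms(6) c_def w_def]
  define D where "D = d P Q"
  define a2 where "a2 = A2 d N v prefP \<tau> P Q"
  define a1 where "a1 = A1 d N v prefP \<tau> P Q"
  define b2 where "b2 = B2 d N v prefP \<tau> P Q"
  define b1 where "b1 = B1 d N v prefP \<tau> P Q"
  define s where "s i = (if i \<in> a2 then - w else 0) + (if i \<in> a1 then - 1 else 0)
      + (if i \<in> b1 then 1 else 0) + (if i \<in> b2 then w else 0)" for i
  have D0: "D \<ge> 0" by (simp add: D_def)
  have key: "d (v i) P - c * d (v i) Q \<le> D / w * s i" if i: "i \<in> N" for i
  proof -
    define x where "x = d (v i) P"
    define y where "y = d (v i) Q"
    have vi: "v i \<in> M" using assms(3) i by auto
    have x0: "x \<ge> 0" and y0: "y \<ge> 0" by (simp_all add: x_def y_def)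
    have t1: "D \<le> x + y" unfolding D_def x_def y_def
      using triangle[OF assms(4) vi assms(5)] commute[of P "v i"] by simp
    have t2: "x \<le> y + D" unfolding D_def x_def y_def
      using triangle[OF vi assms(5) assms(4)] commute[of Q P] by simp
    show ?thesis
    proof (cases "prefP i")
      case True
      hence xy: "x \<le> y" using assms(7) i by (simp add: x_def y_def)
      show ?thesis
      proof (cases "strength d (v i) P Q > ereal \<tau>")
        case True
        hence "\<tau> * x \<le> y" using strength_gt[OF True assms(6)] by (simp add: x_def y_def)
        hence "x - c * y \<le> - D" using lA2[OF x0 _ t1 pr(2) assms(6)] by simp
        moreover have "s i = - w" using True \<open>prefP i\<close> i
          by (auto simp: s_def a2_def a1_def b1_def b2_def A2_def A1_def B1_def B2_def)
        ultimately show ?thesis using pr(1) by (simp add: x_def y_def)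
      next
        case False
        hence "x - c * y \<le> - D / w" using lA1[OF x0 xy t1 pr(3) pr(1)] by simp
        moreover have "s i = - 1" using False \<open>prefP i\<close> i
          by (auto simp: s_def a2_def a1_def b1_def b2_def A2_def A1_def B1_def B2_def not_less)
        ultimately show ?thesis by (simp add: x_def y_def)
      qed
    next
      case False
      show ?thesis
      proof (cases "strength d (v i) Q P > ereal \<tau>")
        case True
        have "x - c * y \<le> D / w * w" using lB2[OF t2 y0 pr(4) pr(1)] .
        moreover have "s i = w" using True \<open>\<not> prefP i\<close> i
          by (auto simp: s_def a2_def a1_def b1_def b2_def A2_def A1_def B1_def B2_def)
        ultimately show ?thesis by (simp add: x_def y_def)
      next
        case F2: False
        hence "strength d (v i) Q P \<le> ereal \<tau>" by (simp add: not_less)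
        hence "x \<le> \<tau> * y" using strength_le[of d "v i" Q P \<tau>] assms(6) x0 y0 by (simp add: x_def y_def)
        hence "x - c * y \<le> D / w" using lB1[OF _ t2 y0 D0 pr(1) pr(4) pr(5)] by simp
        moreover have "s i = 1" using F2 \<open>\<not> prefP i\<close> i
          by (auto simp: s_def a2_def a1_def b1_def b2_def A2_def A1_def B1_def B2_def not_less)
        ultimately show ?thesis by (simp add: x_def y_def)
      qed
    qed
  qed
  have "SC d N v P - c * SC d N v Q = (\<Sum>i\<in>N. d (v i) P - c * d (v i) Q)"
    by (simp add: SC_def sum_subtractf sum_distrib_left)
  also have "\<dots> \<le> (\<Sum>i\<in>N. D / w * s i)" using key by (rule sum_mono)
  also have "\<dots> = D / w * (\<Sum>i\<in>N. s i)" by (simp add: sum_distrib_left)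
  also have "(\<Sum>i\<in>N. s i) = - w * card a2 - card a1 + card b1 + w * card b2"
  proof -
    have sub: "a2 \<subseteq> N" "a1 \<subseteq> N" "b1 \<subseteq> N" "b2 \<subseteq> N"
      by (auto simp: a2_def a1_def b1_def b2_def A2_def A1_def B1_def B2_def)
    show ?thesis unfolding s_def sum.distrib
      using sum_if_card[OF assms(2) sub(1)] sum_if_card[OF assms(2) sub(2)]
        sum_if_card[OF assms(2) sub(3)] sum_if_card[OF assms(2) sub(4)] by simp
  qed
  also have "D / w * (- w * card a2 - card a1 + card b1 + w * card b2) \<le> 0"
  proof -
    have "- w * card a2 - card a1 + card b1 + w * card b2 \<le> 0"
      using assms(9) by (simp add: wmr1_selects_P_def a2_def a1_def b1_def b2_def w_def)
    moreover have "D / w \<ge> 0" using D0 pr(1) by simp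
    ultimately show ?thesis by (rule mult_nonneg_nonpos[rotated])
  qed
  finally have "SC d N v P - c * SC d N v Q \<le> 0" .
  hence "SC d N v P \<le> c * SC d N v Q" by linarith
  thus ?thesis by (simp only: c_def)
qed

end
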